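(* Let $\Sigma$ be a set of constant symbols with $\star\notin\Sigma$ and $O\in\mathrm{Matr}_\Sigma(\mathcal O)$ an observation. Then $\mathcal L(O)=\{W\in\Sigma^*:\ \text{there exists a tuple }p\text{ of pairwise distinct constants of }\mathbf P\text{ (of length }|W|+1)\text{ such that }O\bar W_p\text{ is nilpotent}\}$.
   Context: Terms: first-order terms built from an infinite set of variables, a binary function symbol $\bullet$ written infix (not associative; by convention right-associating, $t\bullet u\bullet v:=t\bullet(u\bullet v)$), infinitely many constant symbols including a distinguished constant $\star$, and for each $n\ge1$ at least one $n$-ary function symbol. $\mathrm{var}(t)$ is the set of variables of $t$. The height of an occurrence of a variable in $t$ is its distance from the root of the tree of $t$. A renaming is a bijective substitution mapping variables to variables. A flow is a pair of terms written $t\leftarrow u$ with $\mathrm{var}(t)\subseteq\mathrm{var}(u)$, considered up to renaming. The product of flows $u\leftarrow v$ and $t\leftarrow w$ (representatives chosen with disjoint variable sets) is defined iff $v$ and $t$ are unifiable, and then equals $u\theta\leftarrow w\theta$ with $\theta$ a most general unifier of $v,t$. A wiring is a finite set of flows, written as a formal sum, with $0$ the empty wiring; product $FG=\{fg: f\in F,g\in G, fg\text{ defined}\}$, $F^n$ the $n$-fold product. $F$ is nilpotent if $F^n=0$ for some $n\in\mathbb N$. A flow $t\leftarrow u$ is balanced if for every variable $x$, all occurrences of $x$ in $t$ and in $u$ have the same height; $\mathcal B$ is the set of wirings all of whose flows are balanced. A semiring is a set of wirings containing $0$ and closed under finite sums (unions) and products. Tensor product of flows (variables renamed apart): $(u\leftarrow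 v)\otimes(t\leftarrow w):=u\bullet t\leftarrow v\bullet w$; extended to wirings by $(\sum_i f_i)\otimes(\sum_j g_j)=\sum_{i,j}f_i\otimes g_j$, and to semirings by $\mathcal A\otimes\mathcal B=\{\sum_i F_i\otimes G_i: F_i\in\mathcal A,G_i\in\mathcal B\}$, right-associating. For a set $E$ of closed terms, $\mathcal C(E)=\{\sum_i t_i\leftarrow u_i: t_i,u_i\in E\}$. For a set of symbols $\mathbf S$ and semiring $\mathcal A$, $\mathcal R_{\mathbf S}(\mathcal A)$ is the set of wirings of $\mathcal A$ not using symbols of $\mathbf S$. Fix disjoint infinite sets of constants $\mathbf P$ (position constants) and $\mathbf S$ (states), a unary function symbol $\mathrm M$, and constants $\mathrm L,\mathrm R$. The observation semiring is $\mathcal O:=\mathcal C(\mathbf S)\otimes\mathcal R_{\mathbf P}(\mathcal B)$. For a set of constants $\Sigma$ and semiring $\mathcal A$, $\mathrm{Matr}_\Sigma(\mathcal A):=\mathcal C(\Sigma\cup\{\star\})\otimes\mathcal C(\{\mathrm L,\mathrm R\})\otimes\mathcal A$. An observation over $\Sigma$ is any element of $\mathrm{Matr}_\Sigma(\mathcal O)$. Word representation: write $t\rightleftarrows u$ for $t\leftarrow u+u\leftarrow t$. For $W=c_1\cdots c_n$ over $\Sigma$ and pairwise distinct $p=(p_0,\dots,p_n)\in\mathbf P^{n+1}$, set $p_{n+1}=p_0$, $c_0=c_{n+1}=\star$, and, with $x,y$ variables, $\bar W_p=\sum_{i=0}^n\big(c_i\bullet\mathrm L\bullet x\bullet y\bullet\mathrm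 M(p_i)\ \rightleftarrows\ c_{i+1}\bullet\mathrm R\bullet x\bullet y\bullet\mathrm M(p_{i+1})\big)$. The language of $O$ is defined as $\mathcal L(O)=\{W\in\Sigma^*:\ O\bar W_p\text{ is nilpotent for every tuple }p\text{ of pairwise distinct constants of }\mathbf P\text{ of length }|W|+1\}$. *)

theory Defs
  imports Main
begin

text \<open>Constant symbols: the distinguished constant Star, the constants L and R,
  the position constants P (CP n), the states S (CS n), and infinitely many further
  constants (CO n).\<close>
datatype cnst = Star | CL | CR | CP nat | CS nat | CO nat

definition Pconsts :: "cnst set" where "Pconsts = range CP"
definition Sconsts :: "cnst set" where "Sconsts = range CS"

text \<open>Function symbols are identified by a name together with the number of
  arguments they are applied to; so there are infinitely many n-ary symbols for each n.\<close>
datatype trm = Var nat | Dot trm trm | Const cnst | Fn string "trm list"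

fun vars :: "trm \<Rightarrow> nat set" where
  "vars (Var x) = {x}"
| "vars (Dot a b) = vars a \<union> vars b"
| "vars (Const c) = {}"
| "vars (Fn f ts) = \<Union> (set (map vars ts))"

fun constsof :: "trm \<Rightarrow> cnst set" where
  "constsof (Var x) = {}"
| "constsof (Dot a b) = constsof a \<union> constsof b"
| "constsof (Const c) = {c}"
| "constsof (Fn f ts) = \<Union> (set (map constsof ts))"

fun heights :: "trm \<Rightarrow> nat \<Rightarrow> nat set" where
  "heights (Var y) x = (if x = y then {0} else {})"
| "heights (Dot a b) x = Suc ` (heights a x \<union> heights b x)"
| "heights (Const c) x = {}"
| "heights (Fn f ts) x = Suc ` \<Union> (set (map (\<lambda>t. heights t x) ts))"

fun subst :: "(nat \<Rightarrow> trm) \<Rightarrow> trm \<Rightarrow> trm" where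
  "subst \<sigma> (Var x) = \<sigma> x"
| "subst \<sigma> (Dot a b) = Dot (subst \<sigma> a) (subst \<sigma> b)"
| "subst \<sigma> (Const c) = Const c"
| "subst \<sigma> (Fn f ts) = Fn f (map (subst \<sigma>) ts)"

definition renaming :: "(nat \<Rightarrow> trm) \<Rightarrow> bool" where
  "renaming \<rho> \<longleftrightarrow> (\<exists>h. bij h \<and> \<rho> = Var \<circ> h)"

definition is_mgu :: "(nat \<Rightarrow> trm) \<Rightarrow> trm \<Rightarrow> trm \<Rightarrow> bool" where
  "is_mgu \<theta> a b \<longleftrightarrow> subst \<theta> a = subst \<theta> b \<and>
     (\<forall>\<sigma>. subst \<sigma> a = subst \<sigma> b \<longrightarrow> (\<exists>\<delta>. \<forall>x. \<sigma> x = subst \<delta> (\<theta> x)))"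

text \<open>A representative of a flow  t \<leftarrow> u  is the pair (t, u). A flow is the class of
  a representative up to renaming.\<close>
definition is_flowrep :: "trm \<times> trm \<Rightarrow> bool" where
  "is_flowrep p \<longleftrightarrow> vars (fst p) \<subseteq> vars (snd p)"

definition flow_class :: "trm \<Rightarrow> trm \<Rightarrow> (trm \<times> trm) set" where
  "flow_class t u = {(subst \<rho> t, subst \<rho> u) | \<rho>. renaming \<rho>}"

definition is_flow :: "(trm \<times> trm) set \<Rightarrow> bool" where
  "is_flow f \<longleftrightarrow> (\<exists>t u. is_flowrep (t, u) \<and> f = flow_class t u)"

text \<open>A wiring is a finite set of flows; 0 is the empty wiring, sums are unions.\<close>
definition is_wiring :: "(trm \<times> trm) set set \<Rightarrow> bool" where
  "is_wiring F \<longleftrightarrow> finite F \<and> (\<forall>f\<in>F. is_flow f)"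

text \<open>Product of flows (u \<leftarrow> v)(t \<leftarrow> w) = u\<theta> \<leftarrow> w\<theta>, representatives renamed apart,
  theta an mgu of v and t. The product is defined iff this set is nonempty.\<close>
definition flow_prod :: "(trm \<times> trm) set \<Rightarrow> (trm \<times> trm) set \<Rightarrow> (trm \<times> trm) set" where
  "flow_prod f g = {(subst \<theta> u, subst \<theta> w) | u v t w \<theta>.
      (u, v) \<in> f \<and> (t, w) \<in> g \<and> (vars u \<union> vars v) \<inter> (vars t \<union> vars w) = {} \<and> is_mgu \<theta> v t}"

definition wprod :: "(trm \<times> trm) set set \<Rightarrow> (trm \<times> trm) set set \<Rightarrow> (trm \<times> trm) set set" where
  "wprod F G = {flow_prod f g | f g. f \<in> F \<and> g \<in> G \<and> flow_prod f g \<noteq> {}}"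

fun wpow :: "(trm \<times> trm) set set \<Rightarrow> nat \<Rightarrow> (trm \<times> trm) set set" where
  "wpow F 0 = {flow_class (Var 0) (Var 0)}"
| "wpow F (Suc 0) = F"
| "wpow F (Suc (Suc n)) = wprod (wpow F (Suc n)) F"

definition nilpotent :: "(trm \<times> trm) set set \<Rightarrow> bool" where
  "nilpotent F \<longleftrightarrow> (\<exists>n. wpow F n = {})"

definition balanced_rep :: "trm \<times> trm \<Rightarrow> bool" where
  "balanced_rep p \<longleftrightarrow> (\<forall>x. \<exists>k. heights (fst p) x \<union> heights (snd p) x \<subseteq> {k})"

definition Bal :: "(trm \<times> trm) set set set" where
  "Bal = {F. is_wiring F \<and> (\<forall>f\<in>F. \<forall>p\<in>f. balanced_rep p)}"

definition Cw :: "trm set \<Rightarrow> (trm \<times> trm) set set set" where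
  "Cw E = {F. finite F \<and> (\<forall>f\<in>F. \<exists>t u. t \<in> E \<and> u \<in> E \<and> f = flow_class t u)}"

definition ftensor :: "(trm \<times> trm) set \<Rightarrow> (trm \<times> trm) set \<Rightarrow> (trm \<times> trm) set" where
  "ftensor f g = {(Dot u t, Dot v w) | u v t w.
      (u, v) \<in> f \<and> (t, w) \<in> g \<and> (vars u \<union> vars v) \<inter> (vars t \<union> vars w) = {}}"

definition wtensor :: "(trm \<times> trm) set set \<Rightarrow> (trm \<times> trm) set set \<Rightarrow> (trm \<times> trm) set set" where
  "wtensor F G = {ftensor f g | f g. f \<in> F \<and> g \<in> G}"

definition stensor :: "(trm \<times> trm) set set set \<Rightarrow> (trm \<times> trm) set set set \<Rightarrow> (trm \<times> trm) set set set" where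
  "stensor A B = {\<Union> (set (map (\<lambda>(F, G). wtensor F G) xs)) | xs. set xs \<subseteq> A \<times> B}"

text \<open>R_S(A): wirings of A not using symbols of S (here S is a set of constants).\<close>
definition Rsym :: "cnst set \<Rightarrow> (trm \<times> trm) set set set \<Rightarrow> (trm \<times> trm) set set set" where
  "Rsym S A = {F \<in> A. \<forall>f\<in>F. \<forall>p\<in>f. (constsof (fst p) \<union> constsof (snd p)) \<inter> S = {}}"

definition Obs :: "(trm \<times> trm) set set set" where
  "Obs = stensor (Cw (Const ` Sconsts)) (Rsym Pconsts Bal)"

definition Matr :: "cnst set \<Rightarrow> (trm \<times> trm) set set set \<Rightarrow> (trm \<times> trm) set set set" where
  "Matr \<Sigma> A = stensor (Cw (Const ` (\<Sigma> \<union> {Star}))) (stensor (Cw (Const ` {CL, CR})) A)"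

definition Mt :: "cnst \<Rightarrow> trm" where "Mt p = Fn ''M'' [Const p]"

text \<open>c_0 = c_(n+1) = Star, c_i = W_i for 1 \<le> i \<le> n (W_i = W ! (i - 1)).\<close>
definition letter :: "cnst list \<Rightarrow> nat \<Rightarrow> cnst" where
  "letter W i = (if i = 0 \<or> i > length W then Star else W ! (i - 1))"

text \<open>p_i for 0 \<le> i \<le> n, and p_(n+1) = p_0.\<close>
definition pos :: "cnst list \<Rightarrow> nat \<Rightarrow> cnst" where
  "pos p i = (if i < length p then p ! i else p ! 0)"

definition wordrep :: "cnst list \<Rightarrow> cnst list \<Rightarrow> (trm \<times> trm) set set" where
  "wordrep W p = (\<Union>i\<in>{0..length W}.
     (let a = Dot (Const (letter W i)) (Dot (Const CL) (Dot (Var 0) (Dot (Var 1) (Mt (pos p i)))));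
          b = Dot (Const (letter W (Suc i))) (Dot (Const CR) (Dot (Var 0) (Dot (Var 1) (Mt (pos p (Suc i))))))
      in {flow_class a b, flow_class b a}))"

definition lang :: "cnst set \<Rightarrow> (trm \<times> trm) set set \<Rightarrow> cnst list set" where
  "lang \<Sigma> Ob = {W. set W \<subseteq> \<Sigma> \<and>
     (\<forall>p. length p = length W + 1 \<and> distinct p \<and> set p \<subseteq> Pconsts \<longrightarrow> nilpotent (wprod Ob (wordrep W p)))}"

end

theory Submission imports Defs begin

fun cmap :: "(cnst \<Rightarrow> cnst) \<Rightarrow> trm \<Rightarrow> trm" where
  "cmap \<pi> (Var x) = Var x"
| "cmap \<pi> (Dot a b) = Dot (cmap \<pi> a) (cmap \<pi> b)"
| "cmap \<pi> (Const c) = Const (\<pi> c)"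
| "cmap \<pi> (Fn f ts) = Fn f (map (cmap \<pi>) ts)"

lemma cmap_vars[simp]: "vars (cmap \<pi> t) = vars t"
  by (induction t) auto

lemma cmap_subst: "cmap \<pi> (subst \<sigma> t) = subst (cmap \<pi> \<circ> \<sigma>) (cmap \<pi> t)"
  by (induction t) auto

lemma cmap_comp: "cmap \<rho> (cmap \<pi> t) = cmap (\<rho> \<circ> \<pi>) t"
  by (induction t) auto

lemma cmap_id: "cmap id t = t"
  by (induction t) (auto simp: map_idI)

lemma cmap_fix: "(\<forall>c\<in>constsof t. \<pi> c = c) \<Longrightarrow> cmap \<pi> t = t"
  by (induction t) (auto simp: map_idI)

definition good :: "trm \<Rightarrow> bool" where "good t \<longleftrightarrow> (\<exists>c r. t = Dot (Const c) r)"

definition gm :: "(cnst \<Rightarrow> cnst) \<Rightarrow> trm \<Rightarrow> trm" where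
  "gm \<pi> t = (case t of Dot a r \<Rightarrow> Dot a (cmap \<pi> r) | _ \<Rightarrow> t)"

lemma gm_subst: "good t \<Longrightarrow> gm \<pi> (subst \<sigma> t) = subst (cmap \<pi> \<circ> \<sigma>) (gm \<pi> t)"
  by (auto simp: good_def gm_def cmap_subst)

lemma gm_vars[simp]: "good t \<Longrightarrow> vars (gm \<pi> t) = vars t"
  by (auto simp: good_def gm_def)

lemma good_gm[simp]: "good t \<Longrightarrow> good (gm \<pi> t)"
  by (auto simp: good_def gm_def)

lemma good_subst[simp]: "good t \<Longrightarrow> good (subst \<sigma> t)"
  by (auto simp: good_def)

lemma gm_comp: "gm \<rho> (gm \<pi> t) = gm (\<rho> \<circ> \<pi>) t"
  by (auto simp: gm_def cmap_comp split: trm.splits)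

lemma cmap_inv1: "bij \<pi> \<Longrightarrow> cmap (inv \<pi>) (cmap \<pi> t) = t"
  by (simp add: cmap_comp bij_is_inj cmap_id)

lemma cmap_inv2: "bij \<pi> \<Longrightarrow> cmap \<pi> (cmap (inv \<pi>) t) = t"
  proof -
  assume "bij \<pi>"
  then have "\<pi> \<circ> inv \<pi> = id" by (meson bij_is_surj surj_iff)
  then show ?thesis by (simp add: cmap_comp cmap_id)
qed

lemma gm_inv1: "bij \<pi> \<Longrightarrow> gm (inv \<pi>) (gm \<pi> t) = t"
  by (auto simp: gm_def cmap_inv1 split: trm.splits)

lemma gm_inv2: "bij \<pi> \<Longrightarrow> gm \<pi> (gm (inv \<pi>) t) = t"
  by (auto simp: gm_def cmap_inv2 split: trm.splits)

lemma mgu_gm: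
  assumes "good a" "good b" "bij \<pi>" "is_mgu \<theta> a b"
  shows "is_mgu (cmap \<pi> \<circ> \<theta>) (gm \<pi> a) (gm \<pi> b)"
  unfolding is_mgu_def
proof (intro conjI allI impI)
  show "subst (cmap \<pi> \<circ> \<theta>) (gm \<pi> a) = subst (cmap \<pi> \<circ> \<theta>) (gm \<pi> b)"
    using assms by (metis gm_subst is_mgu_def)
next
  fix \<sigma> assume h: "subst \<sigma> (gm \<pi> a) = subst \<sigma> (gm \<pi> b)"
  have "gm (inv \<pi>) (subst \<sigma> (gm \<pi> a)) = subst (cmap (inv \<pi>) \<circ> \<sigma>) a"
    using assms by (simp add: gm_subst gm_inv1)
  moreover have "gm (inv \<pi>) (subst \<sigma> (gm \<pi> b)) = subst (cmap (inv \<pi>) \<circ> \<sigma>) b"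
    using assms by (simp add: gm_subst gm_inv1)
  ultimately have "subst (cmap (inv \<pi>) \<circ> \<sigma>) a = subst (cmap (inv \<pi>) \<circ> \<sigma>) b" using h by simp
  then obtain \<delta> where d: "\<forall>x. (cmap (inv \<pi>) \<circ> \<sigma>) x = subst \<delta> (\<theta> x)"
    using assms(4) unfolding is_mgu_def by blast
  have "\<forall>x. \<sigma> x = subst (cmap \<pi> \<circ> \<delta>) ((cmap \<pi> \<circ> \<theta>) x)"
  proof
    fix x
    have "\<sigma> x = cmap \<pi> (cmap (inv \<pi>) (\<sigma> x))" using assms(3) by (simp add: cmap_inv2)
    also have "\<dots> = cmap \<pi> (subst \<delta> (\<theta> x))" using d by simp
    also have "\<dots> = subst (cmap \<pi> \<circ> \<delta>) ((cmap \<pi> \<circ> \<theta>) x)" by (simp add: cmap_subst)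
    finally show "\<sigma> x = subst (cmap \<pi> \<circ> \<delta>) ((cmap \<pi> \<circ> \<theta>) x)" .
  qed
  then show "\<exists>\<delta>. \<forall>x. \<sigma> x = subst \<delta> ((cmap \<pi> \<circ> \<theta>) x)" by blast
qed

definition Gf :: "(cnst \<Rightarrow> cnst) \<Rightarrow> (trm \<times> trm) set \<Rightarrow> (trm \<times> trm) set" where
  "Gf \<pi> f = (\<lambda>(a, b). (gm \<pi> a, gm \<pi> b)) ` f"

definition goodf :: "(trm \<times> trm) set \<Rightarrow> bool" where
  "goodf f \<longleftrightarrow> (\<forall>(a, b)\<in>f. good a \<and> good b)"

lemma goodf_Gf: "goodf f \<Longrightarrow> goodf (Gf \<pi> f)"
  by (auto simp: goodf_def Gf_def)

lemma goodf_prod: "goodf f \<Longrightarrow> goodf g \<Longrightarrow> goodf (flow_prod f g)"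
  by (fastforce simp: goodf_def flow_prod_def)

lemma Gf_inv: "bij \<pi> \<Longrightarrow> Gf (inv \<pi>) (Gf \<pi> f) = f"
  by (force simp: Gf_def image_image gm_inv1)

lemma Gf_inv2: "bij \<pi> \<Longrightarrow> Gf \<pi> (Gf (inv \<pi>) f) = f"
  by (force simp: Gf_def image_image gm_inv2)

lemma Gf_prod_sub:
  assumes "goodf f" "goodf g" "bij \<pi>"
  shows "Gf \<pi> (flow_prod f g) \<subseteq> flow_prod (Gf \<pi> f) (Gf \<pi> g)"
proof
  fix e assume "e \<in> Gf \<pi> (flow_prod f g)"
  then obtain u v t w \<theta> where e: "e = (gm \<pi> (subst \<theta> u), gm \<pi> (subst \<theta> w))"
    and m: "(u, v) \<in> f" "(t, w) \<in> g" "(vars u \<union> vars v) \<inter> (vars t \<union> vars w) = {}" "is_mgu \<theta> v t"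
    unfolding Gf_def flow_prod_def by auto
  have gd: "good u" "good v" "good t" "good w" using m assms unfolding goodf_def by auto
  have "e = (subst (cmap \<pi> \<circ> \<theta>) (gm \<pi> u), subst (cmap \<pi> \<circ> \<theta>) (gm \<pi> w))"
    using e gd by (simp add: gm_subst)
  moreover have "(gm \<pi> u, gm \<pi> v) \<in> Gf \<pi> f" "(gm \<pi> t, gm \<pi> w) \<in> Gf \<pi> g"
    using m unfolding Gf_def by force+
  moreover have "(vars (gm \<pi> u) \<union> vars (gm \<pi> v)) \<inter> (vars (gm \<pi> t) \<union> vars (gm \<pi> w)) = {}"
    using m gd by simp
  moreover have "is_mgu (cmap \<pi> \<circ> \<theta>) (gm \<pi> v) (gm \<pi> t)"
    using mgu_gm gd m assms by blast
  ultimately show "e \<in> flow_prod (Gf \<pi> f) (Gf \<pi> g)"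
    unfolding flow_prod_def by blast
qed

lemma Gf_prod:
  assumes "goodf f" "goodf g" "bij \<pi>"
  shows "flow_prod (Gf \<pi> f) (Gf \<pi> g) = Gf \<pi> (flow_prod f g)"
proof
  show "Gf \<pi> (flow_prod f g) \<subseteq> flow_prod (Gf \<pi> f) (Gf \<pi> g)" using Gf_prod_sub assms .
  have bi: "bij (inv \<pi>)" using assms(3) by (simp add: bij_imp_bij_inv)
  have "Gf (inv \<pi>) (flow_prod (Gf \<pi> f) (Gf \<pi> g)) \<subseteq> flow_prod (Gf (inv \<pi>) (Gf \<pi> f)) (Gf (inv \<pi>) (Gf \<pi> g))"
    using Gf_prod_sub[OF goodf_Gf[OF assms(1)] goodf_Gf[OF assms(2)] bi] .
  also have "\<dots> = flow_prod f g" using assms(3) by (simp add: Gf_inv)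
  finally have "Gf \<pi> (Gf (inv \<pi>) (flow_prod (Gf \<pi> f) (Gf \<pi> g))) \<subseteq> Gf \<pi> (flow_prod f g)"
    unfolding Gf_def by blast
  then show "flow_prod (Gf \<pi> f) (Gf \<pi> g) \<subseteq> Gf \<pi> (flow_prod f g)" using assms(3) by (simp add: Gf_inv2)
qed

definition WG :: "(cnst \<Rightarrow> cnst) \<Rightarrow> (trm \<times> trm) set set \<Rightarrow> (trm \<times> trm) set set" where
  "WG \<pi> F = Gf \<pi> ` F"

definition goodW :: "(trm \<times> trm) set set \<Rightarrow> bool" where
  "goodW F \<longleftrightarrow> (\<forall>f\<in>F. goodf f)"

lemma Gf_empty[simp]: "Gf \<pi> f = {} \<longleftrightarrow> f = {}"
  by (simp add: Gf_def)

lemma goodW_prod: "goodW F \<Longrightarrow> goodW G \<Longrightarrow> goodW (wprod F G)"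
  by (auto simp: goodW_def wprod_def goodf_prod)

lemma WG_prod:
  assumes "goodW F" "goodW G" "bij \<pi>"
  shows "wprod (WG \<pi> F) (WG \<pi> G) = WG \<pi> (wprod F G)"
proof -
  have *: "\<And>f g. f \<in> F \<Longrightarrow> g \<in> G \<Longrightarrow> flow_prod (Gf \<pi> f) (Gf \<pi> g) = Gf \<pi> (flow_prod f g)"
    using assms Gf_prod unfolding goodW_def by blast
  show ?thesis
  proof
    show "wprod (WG \<pi> F) (WG \<pi> G) \<subseteq> WG \<pi> (wprod F G)"
    proof
      fix h assume "h \<in> wprod (WG \<pi> F) (WG \<pi> G)"
      then obtain f g where fg: "f \<in> F" "g \<in> G" "h = flow_prod (Gf \<pi> f) (Gf \<pi> g)" "h \<noteq> {}"
        unfolding wprod_def WG_def by blast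
      then have "h = Gf \<pi> (flow_prod f g)" "flow_prod f g \<noteq> {}" using * by auto
      then show "h \<in> WG \<pi> (wprod F G)" using fg unfolding wprod_def WG_def by blast
    qed
    show "WG \<pi> (wprod F G) \<subseteq> wprod (WG \<pi> F) (WG \<pi> G)"
    proof
      fix h assume "h \<in> WG \<pi> (wprod F G)"
      then obtain f g where fg: "f \<in> F" "g \<in> G" "h = Gf \<pi> (flow_prod f g)" "flow_prod f g \<noteq> {}"
        unfolding wprod_def WG_def by blast
      then have "h = flow_prod (Gf \<pi> f) (Gf \<pi> g)" "h \<noteq> {}" using * by auto
      then show "h \<in> wprod (WG \<pi> F) (WG \<pi> G)" using fg unfolding wprod_def WG_def by blast
    qed
  qed
qed

lemma WG_pow:
  assumes "goodW F" "bij \<pi>"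
  shows "wpow (WG \<pi> F) (Suc n) = WG \<pi> (wpow F (Suc n)) \<and> goodW (wpow F (Suc n))"
proof (induction n)
  case 0
  then show ?case using assms by simp
next
  case (Suc n)
  then show ?case using assms by (simp del: wpow.simps add: wpow.simps(3) WG_prod goodW_prod)
qed

lemma wpow0_ne: "wpow F 0 \<noteq> {}" by simp

lemma WG_nil:
  assumes "goodW F" "bij \<pi>" "nilpotent F"
  shows "nilpotent (WG \<pi> F)"
proof -
  obtain n where n: "wpow F n = {}" using assms(3) unfolding nilpotent_def by blast
  then obtain m where m: "n = Suc m" by (cases n) auto
  have "wpow (WG \<pi> F) (Suc m) = {}" using WG_pow[OF assms(1,2), of m] n m by (simp add: WG_def)
  then show ?thesis unfolding nilpotent_def by blast
qed

lemma ren_cmap: "renaming \<rho> \<Longrightarrow> cmap \<pi> \<circ> \<rho> = \<rho>"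
  by (auto simp: renaming_def)

lemma Gf_class:
  assumes "good a" "good b"
  shows "Gf \<pi> (flow_class a b) = flow_class (gm \<pi> a) (gm \<pi> b)"
proof -
  have r: "\<And>\<rho> t. renaming \<rho> \<Longrightarrow> good t \<Longrightarrow> gm \<pi> (subst \<rho> t) = subst \<rho> (gm \<pi> t)"
    by (simp add: gm_subst ren_cmap)
  show ?thesis using assms unfolding Gf_def flow_class_def
    by (auto simp: r image_iff) (metis r)
qed

lemma goodf_class: "good a \<Longrightarrow> good b \<Longrightarrow> goodf (flow_class a b)"
  by (auto simp: goodf_def flow_class_def)

lemma WG_wordrep:
  assumes "p \<noteq> []" "\<pi> CL = CL" "\<pi> CR = CR"
  shows "WG \<pi> (wordrep W p) = wordrep W (map \<pi> p) \<and> goodW (wordrep W p)"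
proof -
  have pos: "\<And>i. \<pi> (pos p i) = pos (map \<pi> p) i"
    using assms(1) by (auto simp: pos_def)
  show ?thesis
    unfolding WG_def wordrep_def goodW_def Let_def
    by (simp add: image_UN Gf_class good_def goodf_class gm_def pos Mt_def assms(2,3))
qed

definition noP :: "(trm \<times> trm) set set \<Rightarrow> bool" where
  "noP F \<longleftrightarrow> (\<forall>f\<in>F. \<forall>(a, b)\<in>f. constsof a \<inter> Pconsts = {} \<and> constsof b \<inter> Pconsts = {})"

lemma stensor_elem:
  assumes "X \<in> stensor A B" "f \<in> X"
  shows "\<exists>F\<in>A. \<exists>G\<in>B. \<exists>f1\<in>F. \<exists>f2\<in>G. f = ftensor f1 f2"
proof -
  obtain xs where "X = \<Union> (set (map (\<lambda>(F, G). wtensor F G) xs))" "set xs \<subseteq> A \<times> B"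
    using assms(1) unfolding stensor_def by blast
  then show ?thesis using assms(2) unfolding wtensor_def by fastforce
qed

lemma noP_stensor:
  assumes "\<forall>F\<in>A. noP F" "\<forall>G\<in>B. noP G" "X \<in> stensor A B"
  shows "noP X"
  unfolding noP_def
proof (intro ballI)
  fix f p assume f: "f \<in> X" and p: "p \<in> f"
  obtain F G f1 f2 where "F \<in> A" "G \<in> B" "f1 \<in> F" "f2 \<in> G" "f = ftensor f1 f2"
    using stensor_elem[OF assms(3) f] by blast
  then show "case p of (a, b) \<Rightarrow> constsof a \<inter> Pconsts = {} \<and> constsof b \<inter> Pconsts = {}"
    using p assms(1,2) unfolding ftensor_def noP_def by fastforce
qed

lemma Cw_elem:
  assumes "F \<in> Cw (Const ` S)" "f \<in> F" "(a, b) \<in> f"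
  shows "\<exists>c c'. c \<in> S \<and> c' \<in> S \<and> a = Const c \<and> b = Const c'"
  using assms unfolding Cw_def flow_class_def by auto

lemma noP_Cw:
  assumes "S \<inter> Pconsts = {}" "F \<in> Cw (Const ` S)"
  shows "noP F"
  unfolding noP_def using assms Cw_elem by fastforce

lemma noP_R: "F \<in> Rsym Pconsts A \<Longrightarrow> noP F"
  unfolding noP_def Rsym_def
proof (intro ballI)
  fix f p assume "F \<in> {F \<in> A. \<forall>f\<in>F. \<forall>p\<in>f. (constsof (fst p) \<union> constsof (snd p)) \<inter> Pconsts = {}}"
    "f \<in> F" "p \<in> f"
  then have "(constsof (fst p) \<union> constsof (snd p)) \<inter> Pconsts = {}" by blast
  then show "case p of (a, b) \<Rightarrow> constsof a \<inter> Pconsts = {} \<and> constsof b \<inter> Pconsts = {}"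
    by (cases p) auto
qed

lemma P_disj: "Sconsts \<inter> Pconsts = {}" "{CL, CR} \<inter> Pconsts = {}"
  by (auto simp: Sconsts_def Pconsts_def)

lemma Ob_elem:
  assumes "Ob \<in> Matr \<Sigma> Obs" "f \<in> Ob" "(a, b) \<in> f"
  shows "\<exists>c t c' w. a = Dot (Const c) t \<and> b = Dot (Const c') w \<and>
     constsof t \<inter> Pconsts = {} \<and> constsof w \<inter> Pconsts = {}"
proof -
  have o: "\<forall>G\<in>Obs. noP G"
    unfolding Obs_def using noP_stensor noP_Cw[OF P_disj(1)] noP_R by blast
  have s: "\<forall>G\<in>stensor (Cw (Const ` {CL, CR})) Obs. noP G"
    using noP_stensor[OF _ o] noP_Cw[OF P_disj(2)] by blast
  obtain F G f1 f2 where FG: "F \<in> Cw (Const ` (\<Sigma> \<union> {Star}))" "G \<in> stensor (Cw (Const ` {CL, CR})) Obs"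
    "f1 \<in> F" "f2 \<in> G" "f = ftensor f1 f2"
    using stensor_elem[OF assms(1)[unfolded Matr_def] assms(2)] by blast
  then obtain u v t w where "(u, v) \<in> f1" "(t, w) \<in> f2" "a = Dot u t" "b = Dot v w"
    using assms(3) unfolding ftensor_def by blast
  then show ?thesis using Cw_elem[OF FG(1,3)] s FG(2,4) unfolding noP_def by fastforce
qed

lemma WG_Ob:
  assumes "Ob \<in> Matr \<Sigma> Obs" "\<forall>c. c \<notin> Pconsts \<longrightarrow> \<pi> c = c"
  shows "WG \<pi> Ob = Ob \<and> goodW Ob"
proof -
  have "\<And>f. f \<in> Ob \<Longrightarrow> Gf \<pi> f = f \<and> goodf f"
  proof -
    fix f assume f: "f \<in> Ob"
    have e: "\<And>a b. (a, b) \<in> f \<Longrightarrow> gm \<pi> a = a \<and> gm \<pi> b = b \<and> good a \<and> good b"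
    proof -
      fix a b assume "(a, b) \<in> f"
      then obtain c t c' w where "a = Dot (Const c) t" "b = Dot (Const c') w"
        "constsof t \<inter> Pconsts = {}" "constsof w \<inter> Pconsts = {}"
        using Ob_elem[OF assms(1) f] by blast
      then show "gm \<pi> a = a \<and> gm \<pi> b = b \<and> good a \<and> good b"
        using assms(2) by (auto simp: gm_def good_def intro!: cmap_fix)
    qed
    show "Gf \<pi> f = f \<and> goodf f"
      unfolding Gf_def goodf_def using e by (force simp: image_iff)
  qed
  then show ?thesis unfolding WG_def goodW_def by simp
qed

lemma main_inv:
  assumes "Ob \<in> Matr \<Sigma> Obs" "bij \<pi>" "\<forall>c. c \<notin> Pconsts \<longrightarrow> \<pi> c = c" "p \<noteq> []"
    "nilpotent (wprod Ob (wordrep W p))"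
  shows "nilpotent (wprod Ob (wordrep W (map \<pi> p)))"
proof -
  have cl: "\<pi> CL = CL" "\<pi> CR = CR" using assms(3) P_disj(2) by auto
  note o = WG_Ob[OF assms(1,3)] and w = WG_wordrep[OF assms(4) cl]
  have "nilpotent (WG \<pi> (wprod Ob (wordrep W p)))"
    using WG_nil goodW_prod o w assms by blast
  then show ?thesis using WG_prod[of Ob "wordrep W p" \<pi>] o w assms(2) by simp
qed

definition sw :: "cnst \<Rightarrow> cnst \<Rightarrow> cnst \<Rightarrow> cnst" where
  "sw a b = (\<lambda>x. if x = a then b else if x = b then a else x)"

lemma bij_sw: "bij (sw a b)"
  by (rule o_bij[of "sw a b"]) (auto simp: sw_def fun_eq_iff)

lemma perm_exists:
  fixes p q :: "cnst list"
  assumes "distinct p" "distinct q" "length p = length q" "set p \<inter> set q = {}"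
  shows "\<exists>\<pi>. bij \<pi> \<and> (\<forall>c. c \<notin> set p \<union> set q \<longrightarrow> \<pi> c = c) \<and> map \<pi> p = q"
  using assms
proof (induction p arbitrary: q)
  case Nil
  have "bij (id :: cnst \<Rightarrow> cnst)" by (rule bij_id)
  moreover have "q = []" using Nil by simp
  ultimately show ?case
  proof (intro exI[of _ id] conjI)
    show "bij id" by (rule bij_id)
  qed auto
next
  case (Cons a p')
  then obtain b q' where q: "q = b # q'" by (cases q) auto
  have "distinct p'" "distinct q'" "length p' = length q'" "set p' \<inter> set q' = {}"
    using Cons.prems q by auto
  then obtain \<pi> where \<pi>: "bij \<pi>" "\<forall>c. c \<notin> set p' \<union> set q' \<longrightarrow> \<pi> c = c" "map \<pi> p' = q'"
    using Cons.IH by blast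
  have a: "a \<notin> set p' \<union> set q'" "a \<noteq> b" and b: "b \<notin> set q'" "b \<notin> set p'"
    using Cons.prems q by auto
  have "map (sw a b \<circ> \<pi>) p' = q'"
  proof -
    have "\<forall>x\<in>set q'. sw a b x = x"
    proof
      fix x assume "x \<in> set q'"
      then have "x \<noteq> a" "x \<noteq> b" using a(1) b(1) by blast+
      then show "sw a b x = x" by (simp add: sw_def)
    qed
    then have "map (sw a b) q' = q'" by (simp add: map_idI)
    then show ?thesis using \<pi>(3) by (metis map_map)
  qed
  moreover have "(sw a b \<circ> \<pi>) a = b" using \<pi>(2) a by (simp add: sw_def)
  moreover have "\<forall>c. c \<notin> set (a # p') \<union> set q \<longrightarrow> (sw a b \<circ> \<pi>) c = c"
  proof (intro allI impI)
    fix c assume c: "c \<notin> set (a # p') \<union> set q"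
    then have "\<pi> c = c" "c \<noteq> a" "c \<noteq> b" using \<pi>(2) q by auto
    then show "(sw a b \<circ> \<pi>) c = c" by (simp add: sw_def)
  qed
  moreover have "bij (sw a b \<circ> \<pi>)" using bij_comp[OF \<pi>(1) bij_sw] .
  ultimately have "bij (sw a b \<circ> \<pi>) \<and> (\<forall>c. c \<notin> set (a # p') \<union> set q \<longrightarrow> (sw a b \<circ> \<pi>) c = c)
     \<and> map (sw a b \<circ> \<pi>) (a # p') = q" using q by simp
  then show ?case by blast
qed

lemma perm_P:
  assumes "distinct p" "distinct q" "length p = length q" "set p \<inter> set q = {}"
    "set p \<subseteq> Pconsts" "set q \<subseteq> Pconsts"
  shows "\<exists>\<pi>. bij \<pi> \<and> (\<forall>c. c \<notin> Pconsts \<longrightarrow> \<pi> c = c) \<and> map \<pi> p = q"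
  using perm_exists[OF assms(1-4)] assms(5,6) by blast

lemma transfer_nil:
  assumes "Ob \<in> Matr \<Sigma> Obs" "distinct p" "distinct q" "length p = length q" "p \<noteq> []"
    "set p \<subseteq> Pconsts" "set q \<subseteq> Pconsts" "nilpotent (wprod Ob (wordrep W p))"
  shows "nilpotent (wprod Ob (wordrep W q))"
proof -
  define idx where "idx = (\<lambda>c. case c of CP k \<Rightarrow> k | _ \<Rightarrow> 0)"
  define N where "N = Suc (Max (idx ` (set p \<union> set q)))"
  define r where "r = map CP [N..<N + length p]"
  have lt: "\<And>c. c \<in> set p \<union> set q \<Longrightarrow> idx c < N"
    unfolding N_def by (simp add: le_imp_less_Suc)
  have rP: "set r \<subseteq> Pconsts" unfolding r_def Pconsts_def by auto
  have rd: "distinct r" unfolding r_def by (simp add: distinct_map inj_on_def)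
  have rl: "length r = length p" unfolding r_def by simp
  have nr: "\<forall>c\<in>set r. c \<notin> set p \<union> set q"
  proof
    fix c assume "c \<in> set r"
    then obtain k where k: "c = CP k" "N \<le> k" unfolding r_def by auto
    show "c \<notin> set p \<union> set q"
    proof
      assume "c \<in> set p \<union> set q"
      then have "idx c < N" by (rule lt)
      then show False using k unfolding idx_def by simp
    qed
  qed
  then have disj: "set p \<inter> set r = {}" "set r \<inter> set q = {}" by blast+
  obtain \<pi>1 where 1: "bij \<pi>1" "\<forall>c. c \<notin> Pconsts \<longrightarrow> \<pi>1 c = c" "map \<pi>1 p = r"
    using perm_P[OF assms(2) rd rl[symmetric] disj(1) assms(6) rP] by blast
  obtain \<pi>2 where 2: "bij \<pi>2" "\<forall>c. c \<notin> Pconsts \<longrightarrow> \<pi>2 c = c" "map \<pi>2 r = q"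
    using perm_P[OF rd assms(3) _ disj(2) rP assms(7)] rl assms(4) by auto
  have "nilpotent (wprod Ob (wordrep W r))"
    using main_inv[OF assms(1) 1(1,2) assms(5,8)] 1(3) by simp
  moreover have "r \<noteq> []" using rl assms(5) by auto
  ultimately have "nilpotent (wprod Ob (wordrep W (map \<pi>2 r)))"
    using main_inv[OF assms(1) 2(1,2)] by blast
  then show ?thesis using 2(3) by simp
qed

theorem mainTheorem10:
  fixes \<Sigma> :: "cnst set" and Ob :: "(trm \<times> trm) set set"
  assumes "Star \<notin> \<Sigma>"
    and "Ob \<in> Matr \<Sigma> Obs"
  shows "lang \<Sigma> Ob = {W. set W \<subseteq> \<Sigma> \<and>
     (\<exists>p. length p = length W + 1 \<and> distinct p \<and> set p \<subseteq> Pconsts \<and> nilpotent (wprod Ob (wordrep W p)))}"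
proof (intro set_eqI iffI)
  fix W assume "W \<in> lang \<Sigma> Ob"
  moreover define p where "p = map CP [0..<length W + 1]"
  moreover have "length p = length W + 1" "distinct p" "set p \<subseteq> Pconsts"
    unfolding p_def Pconsts_def by (auto simp: distinct_map inj_on_def)
  ultimately show "W \<in> {W. set W \<subseteq> \<Sigma> \<and>
     (\<exists>p. length p = length W + 1 \<and> distinct p \<and> set p \<subseteq> Pconsts \<and> nilpotent (wprod Ob (wordrep W p)))}"
    unfolding lang_def by blast
next
  fix W assume "W \<in> {W. set W \<subseteq> \<Sigma> \<and>
     (\<exists>p. length p = length W + 1 \<and> distinct p \<and> set p \<subseteq> Pconsts \<and> nilpotent (wprod Ob (wordrep W p)))}"
  then obtain p where W: "set W \<subseteq> \<Sigma>" and p: "length p = length W + 1" "distinct p" "set p \<subseteq> Pconsts"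
    "nilpotent (wprod Ob (wordrep W p))" by blast
  show "W \<in> lang \<Sigma> Ob"
    unfolding lang_def
  proof (intro CollectI conjI allI impI W)
    fix q assume q: "length q = length W + 1 \<and> distinct q \<and> set q \<subseteq> Pconsts"
    show "nilpotent (wprod Ob (wordrep W q))"
    proof -
      have pne: "p \<noteq> []" using p(1) by auto
      have "length p = length q" using p(1) q by simp
      then show ?thesis using transfer_nil[OF assms(2) p(2) _ _ pne p(3) _ p(4)] q by blast
    qed
  qed
qed

end
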